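(* If $T,S\in B(X)$ commute and have real spectra ($\sigma(T),\sigma(S)\subset\mathbb{R}$), then $\max\{r(T),r(S)\}\le r(T+iS)$.
   Context: $X$ is a complex Banach space, $B(X)$ the bounded linear operators on $X$; $\sigma(\cdot)$ and $r(\cdot)$ denote spectrum and spectral radius. *)

theory Defs
  imports "HOL-Analysis.Analysis"
begin

class complex_normed_vector = real_normed_vector +
  fixes scaleC :: "complex \<Rightarrow> 'a \<Rightarrow> 'a"
  assumes scaleC_add_right: "scaleC a (x + y) = scaleC a x + scaleC a y"
    and scaleC_add_left: "scaleC (a + b) x = scaleC a x + scaleC b x"
    and scaleC_scaleC: "scaleC a (scaleC b x) = scaleC (a * b) x"
    and scaleC_one: "scaleC 1 x = x"
    and scaleC_of_real: "scaleC (complex_of_real r) x = scaleR r x"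
    and norm_scaleC: "norm (scaleC a x) = cmod a * norm x"

class complex_banach = complex_normed_vector + banach

definition bounded_clinear_op :: "('a::complex_normed_vector \<Rightarrow> 'a) \<Rightarrow> bool" where
  "bounded_clinear_op T \<longleftrightarrow> bounded_linear T \<and> (\<forall>c x. T (scaleC c x) = scaleC c (T x))"

definition op_spectrum :: "('a::complex_normed_vector \<Rightarrow> 'a) \<Rightarrow> complex set" where
  "op_spectrum T = {l. \<not> (\<exists>U. bounded_clinear_op U \<and>
       (\<forall>x. U (T x - scaleC l x) = x) \<and> (\<forall>x. T (U x) - scaleC l (U x) = x))}"

definition spectral_radius_op :: "('a::complex_normed_vector \<Rightarrow> 'a) \<Rightarrow> real" where
  "spectral_radius_op T = Sup (cmod ` op_spectrum T)"

end

theory Submission imports Defs begin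

lemma scaleC_zero[simp]: "scaleC c (0::'a::complex_normed_vector) = 0"
proof -
  have "scaleC c (0::'a) = scaleC c 0 + scaleC c 0" using scaleC_add_right[of c "0::'a" 0] by simp
  then show ?thesis by simp
qed
lemma scaleC_minus: "scaleC c (- x) = - scaleC c (x::'a::complex_normed_vector)"
proof -
  have "scaleC c (- x) + scaleC c x = 0" using scaleC_add_right[of c "-x" x] by simp
  then show ?thesis by (simp add: add_eq_0_iff)
qed
lemma scaleC_diff: "scaleC c (x - y) = scaleC c x - scaleC c (y::'a::complex_normed_vector)"
  using scaleC_add_right[of c x "-y"] by (simp add: scaleC_minus)
lemma scaleC_scaleR: "scaleC c (r *\<^sub>R x) = r *\<^sub>R scaleC c (x::'a::complex_normed_vector)"
proof -
  have "scaleC c (r *\<^sub>R x) = scaleC c (scaleC (complex_of_real r) x)" by (simp add: scaleC_of_real)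
  also have "\<dots> = scaleC (complex_of_real r) (scaleC c x)" by (simp add: scaleC_scaleC mult.commute)
  finally show ?thesis by (simp add: scaleC_of_real)
qed
lemma scaleC_comm: "scaleC c (scaleC d x) = scaleC d (scaleC c (x::'a::complex_normed_vector))"
  by (simp add: scaleC_scaleC mult.commute)

lemma bclin_scaleC: "bounded_clinear_op (scaleC c :: 'a::complex_normed_vector \<Rightarrow> 'a)"
proof -
  have "bounded_linear (scaleC c :: 'a \<Rightarrow> 'a)"
    by (rule bounded_linear_intro[where K="cmod c"]) (auto simp: scaleC_add_right scaleC_scaleR norm_scaleC mult.commute)
  then show ?thesis unfolding bounded_clinear_op_def by (auto simp: scaleC_comm)
qed

lemma bclin_add: "bounded_clinear_op f \<Longrightarrow> bounded_clinear_op g \<Longrightarrow> bounded_clinear_op (\<lambda>x. f x + g x)"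
  by (auto simp: bounded_clinear_op_def bounded_linear_add scaleC_add_right)
lemma bclin_minus: "bounded_clinear_op f \<Longrightarrow> bounded_clinear_op (\<lambda>x. - f x)"
  by (auto simp: bounded_clinear_op_def bounded_linear_minus scaleC_minus)
lemma bclin_diff: "bounded_clinear_op f \<Longrightarrow> bounded_clinear_op g \<Longrightarrow> bounded_clinear_op (\<lambda>x. f x - g x)"
  by (auto simp: bounded_clinear_op_def bounded_linear_sub scaleC_diff)
lemma bclin_zero: "bounded_clinear_op (\<lambda>x. 0::'a::complex_normed_vector)"
  by (simp add: bounded_clinear_op_def bounded_linear_zero)
lemma bclin_comp: "bounded_clinear_op f \<Longrightarrow> bounded_clinear_op g \<Longrightarrow> bounded_clinear_op (\<lambda>x. f (g x))"
  by (auto simp: bounded_clinear_op_def intro: bounded_linear_compose)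
lemma bclin_id: "bounded_clinear_op (\<lambda>x. x)"
  by (simp add: bounded_clinear_op_def bounded_linear_ident)
lemma bclin_scaleR: "bounded_clinear_op f \<Longrightarrow> bounded_clinear_op (\<lambda>x. r *\<^sub>R f x)"
  by (auto simp: bounded_clinear_op_def scaleC_scaleR intro: bounded_linear_compose[OF bounded_linear_scaleR_right])

typedef (overloaded) 'a bop = "{f::'a::complex_normed_vector \<Rightarrow> 'a. bounded_clinear_op f}"
  morphisms app Bop
  using bclin_id by blast

setup_lifting type_definition_bop

instantiation bop :: (complex_normed_vector) real_normed_vector
begin
lift_definition norm_bop :: "'a bop \<Rightarrow> real" is onorm .
lift_definition minus_bop :: "'a bop \<Rightarrow> 'a bop \<Rightarrow> 'a bop" is "\<lambda>f g x. f x - g x"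
  by (rule bclin_diff)
definition dist_bop :: "'a bop \<Rightarrow> 'a bop \<Rightarrow> real" where "dist_bop a b = norm (a - b)"
definition uniformity_bop :: "('a bop \<times> 'a bop) filter"
  where "uniformity_bop = (INF e\<in>{0 <..}. principal {(x, y). dist x y < e})"
definition open_bop :: "'a bop set \<Rightarrow> bool"
  where "open_bop S = (\<forall>x\<in>S. \<forall>\<^sub>F (x', y) in uniformity. x' = x \<longrightarrow> y \<in> S)"
lift_definition uminus_bop :: "'a bop \<Rightarrow> 'a bop" is "\<lambda>f x. - f x" by (rule bclin_minus)
lift_definition zero_bop :: "'a bop" is "\<lambda>x. 0" by (rule bclin_zero)
lift_definition plus_bop :: "'a bop \<Rightarrow> 'a bop \<Rightarrow> 'a bop" is "\<lambda>f g x. f x + g x" by (rule bclin_add)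
lift_definition scaleR_bop :: "real \<Rightarrow> 'a bop \<Rightarrow> 'a bop" is "\<lambda>r f x. r *\<^sub>R f x" by (rule bclin_scaleR)
definition sgn_bop :: "'a bop \<Rightarrow> 'a bop" where "sgn_bop x = scaleR (inverse (norm x)) x"
instance
proof
  fix x y z :: "'a bop" and a b :: real
  show "x + y + z = x + (y + z)" by transfer (simp add: add.assoc)
  show "x + y = y + x" by transfer (simp add: add.commute)
  show "0 + x = x" by transfer simp
  show "- x + x = 0" by transfer simp
  show "x - y = x + - y" by transfer simp
  show "a *\<^sub>R (x + y) = a *\<^sub>R x + a *\<^sub>R y" by transfer (simp add: scaleR_add_right)
  show "(a + b) *\<^sub>R x = a *\<^sub>R x + b *\<^sub>R x" by transfer (simp add: scaleR_add_left)
  show "a *\<^sub>R b *\<^sub>R x = (a * b) *\<^sub>R x" by transfer simp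
  show "1 *\<^sub>R x = x" by transfer simp
  show "dist x y = norm (x - y)" by (simp add: dist_bop_def)
  show "sgn x = inverse (norm x) *\<^sub>R x" by (simp add: sgn_bop_def)
  show "(uniformity :: ('a bop \<times> 'a bop) filter) = (INF e\<in>{0 <..}. principal {(x, y). dist x y < e})"
    by (simp add: uniformity_bop_def)
  show "open U = (\<forall>x\<in>U. \<forall>\<^sub>F (x', y) in uniformity. x' = x \<longrightarrow> y \<in> U)" for U :: "'a bop set"
    by (simp add: open_bop_def)
  show "(norm x = 0) = (x = 0)" by transfer (auto simp: bounded_clinear_op_def onorm_eq_0)
  show "norm (x + y) \<le> norm x + norm y" by transfer (auto simp: bounded_clinear_op_def intro: onorm_triangle)
  show "norm (a *\<^sub>R x) = \<bar>a\<bar> * norm x" by transfer (auto simp: bounded_clinear_op_def onorm_scaleR)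
qed

end


lemma bop_eqI: "(\<And>x. app f x = app g x) \<Longrightarrow> f = g"
  by (simp add: app_inject[symmetric] fun_eq_iff)

lemma app_bclin: "bounded_clinear_op (app f)"
  using app by blast
lemma app_blin: "bounded_linear (app f)"
  using app_bclin unfolding bounded_clinear_op_def by blast
lemma app_scaleC: "app f (scaleC c x) = scaleC c (app f x)"
  using app_bclin unfolding bounded_clinear_op_def by blast

lemma app_plus[simp]: "app (f + g) x = app f x + app g x" by transfer simp
lemma app_minus[simp]: "app (f - g) x = app f x - app g x" by transfer simp
lemma app_uminus[simp]: "app (- f) x = - app f x" by transfer simp
lemma app_zero[simp]: "app 0 x = 0" by transfer simp
lemma app_scaleR[simp]: "app (r *\<^sub>R f) x = r *\<^sub>R app f x" by transfer simp
lemma norm_bop_def': "norm f = onorm (app f)" by transfer simp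
lemma norm_app: "norm (app f x) \<le> norm f * norm x"
  unfolding norm_bop_def' by (rule onorm[OF app_blin])
lemma norm_bop_bound: "0 \<le> b \<Longrightarrow> (\<And>x. norm (app f x) \<le> b * norm x) \<Longrightarrow> norm f \<le> b"
  unfolding norm_bop_def' by (rule onorm_bound)

instantiation bop :: (complex_normed_vector) "{real_normed_algebra, monoid_mult}"
begin
lift_definition times_bop :: "'a bop \<Rightarrow> 'a bop \<Rightarrow> 'a bop" is "\<lambda>f g x. f (g x)" by (rule bclin_comp)
lift_definition one_bop :: "'a bop" is "\<lambda>x. x" by (rule bclin_id)
instance
proof
  fix x y z :: "'a bop" and a :: real
  show "x * y * z = x * (y * z)" by transfer simp
  show "(x + y) * z = x * z + y * z" by transfer simp
  show "x * (y + z) = x * y + x * z"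
    by (rule bop_eqI) (simp add: times_bop.rep_eq linear_simps app_blin)
  show "a *\<^sub>R x * y = a *\<^sub>R (x * y)" by transfer simp
  show "x * a *\<^sub>R y = a *\<^sub>R (x * y)"
    by (rule bop_eqI) (simp add: times_bop.rep_eq linear_simps app_blin)
  show "1 * x = x" by transfer simp
  show "x * 1 = x" by transfer simp
  show "norm (x * y) \<le> norm x * norm y"
    unfolding norm_bop_def' times_bop.rep_eq
    using onorm_compose[OF app_blin app_blin, of x y] by (simp add: o_def)
qed
end

lemma app_times[simp]: "app (f * g) x = app f (app g x)" by transfer simp
lemma app_one[simp]: "app 1 x = x" by transfer simp


lemma Blinfun_app: "blinfun_apply (Blinfun (app f)) = app f"
  by (rule bounded_linear_Blinfun_apply[OF app_blin])

lemma norm_Blinfun_diff: "norm (Blinfun (app f) - Blinfun (app g)) = norm (f - g)"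
  unfolding norm_blinfun.rep_eq minus_blinfun.rep_eq Blinfun_app norm_bop_def' app_minus ..

instance bop :: (complex_banach) banach
proof
  fix X :: "nat \<Rightarrow> 'a bop"
  assume "Cauchy X"
  define Y where "Y n = Blinfun (app (X n))" for n
  have "Cauchy Y"
    using \<open>Cauchy X\<close> unfolding Cauchy_def dist_norm Y_def norm_Blinfun_diff .
  then obtain L where L: "Y \<longlonglongrightarrow> L" using Cauchy_convergent_iff convergent_def by blast
  have pw: "(\<lambda>n. app (X n) v) \<longlonglongrightarrow> blinfun_apply L v" for v
  proof -
    have "(\<lambda>n. blinfun_apply (Y n) v) \<longlonglongrightarrow> blinfun_apply L v"
      by (rule blinfun.tendsto[OF L tendsto_const])
    then show ?thesis by (simp add: Y_def Blinfun_app)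
  qed
  have cl: "blinfun_apply L (scaleC c v) = scaleC c (blinfun_apply L v)" for c v
  proof -
    have "(\<lambda>n. scaleC c (app (X n) v)) \<longlonglongrightarrow> scaleC c (blinfun_apply L v)"
      using bounded_linear.tendsto[OF bclin_scaleC[unfolded bounded_clinear_op_def, THEN conjunct1] pw] .
    moreover have "(\<lambda>n. scaleC c (app (X n) v)) \<longlonglongrightarrow> blinfun_apply L (scaleC c v)"
      using pw[of "scaleC c v"] by (simp add: app_scaleC)
    ultimately show ?thesis using LIMSEQ_unique by metis
  qed
  have bc: "bounded_clinear_op (blinfun_apply L)"
    unfolding bounded_clinear_op_def using cl blinfun.bounded_linear_right by auto
  define Z where "Z = Bop (blinfun_apply L)"
  have appZ: "app Z = blinfun_apply L" unfolding Z_def using Bop_inverse bc by blast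
  have "Blinfun (app Z) = L" by (simp add: appZ blinfun_apply_inverse)
  then have "norm (X n - Z) = norm (Y n - L)" for n
    using norm_Blinfun_diff[of "X n" Z] by (simp add: Y_def)
  then have "X \<longlonglongrightarrow> Z" using L unfolding LIMSEQ_iff by simp
  then show "convergent X" unfolding convergent_def by blast
qed


lift_definition cs :: "complex \<Rightarrow> 'a::complex_normed_vector bop" is "\<lambda>c. scaleC c" by (rule bclin_scaleC)

lemma app_cs[simp]: "app (cs c) x = scaleC c x" by transfer simp
lemma cs_mult: "cs c * cs d = cs (c * d)" by (rule bop_eqI) (simp add: scaleC_scaleC)
lemma cs_add: "cs (c + d) = cs c + cs d" by (rule bop_eqI) (simp add: scaleC_add_left)
lemma cs_one[simp]: "cs 1 = 1" by (rule bop_eqI) (simp add: scaleC_one)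
lemma cs_zero[simp]: "cs 0 = 0"
  by (rule bop_eqI) (simp add: scaleC_of_real[of 0, simplified])
lemma cs_diff: "cs (c - d) = cs c - cs d"
proof -
  have "cs (c - d) + cs d = cs c" by (subst cs_add[symmetric]) simp
  then show ?thesis by (simp add: eq_diff_eq)
qed
lemma cs_uminus: "cs (- c) = - cs c"
  using cs_diff[of 0 c] by simp
lemma cs_comm: "cs c * f = f * cs c" by (rule bop_eqI) (simp add: app_scaleC)
lemma cs_sum: "cs (\<Sum>i\<in>I. g i) = (\<Sum>i\<in>I. cs (g i))"
  by (induct I rule: infinite_finite_induct) (auto simp: cs_add)
lemma cs_power: "cs (c ^ n) = cs c ^ n"
  by (induct n) (auto simp: cs_mult[symmetric])
lemma norm_cs_mult: "norm (cs c * f) \<le> cmod c * norm f"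
proof (rule norm_bop_bound)
  fix x
  have "norm (app (cs c * f) x) = cmod c * norm (app f x)" by (simp add: norm_scaleC)
  also have "\<dots> \<le> cmod c * (norm f * norm x)" by (rule mult_left_mono[OF norm_app]) simp
  finally show "norm (app (cs c * f) x) \<le> cmod c * norm f * norm x" by (simp add: mult.assoc)
qed simp
lemma norm_one_le: "norm (1::'a::complex_normed_vector bop) \<le> 1"
  by (rule norm_bop_bound) simp_all
lemma norm_cs: "norm (cs c :: 'a::complex_normed_vector bop) \<le> cmod c"
proof -
  have "norm (cs c :: 'a bop) \<le> cmod c * norm (1::'a bop)" using norm_cs_mult[of c "1::'a bop"] by simp
  also have "\<dots> \<le> cmod c * 1" by (rule mult_left_mono[OF norm_one_le]) simp
  finally show ?thesis by simp
qed
lemma norm_power_le: "norm ((z::'a::complex_normed_vector bop) ^ n) \<le> norm z ^ n"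
proof (induct n)
  case 0 then show ?case using norm_one_le by simp
next
  case (Suc n)
  have "norm (z ^ Suc n) \<le> norm z * norm (z ^ n)" by (simp add: norm_mult_ineq)
  also have "\<dots> \<le> norm z * norm z ^ n" by (rule mult_left_mono[OF Suc]) simp
  finally show ?case by simp
qed
lemma cs_mult_power: "(cs c * f) ^ n = cs (c ^ n) * f ^ n"
proof (induct n)
  case 0 then show ?case by simp
next
  case (Suc n)
  have "(cs c * f) ^ Suc n = cs c * f * (cs (c ^ n) * f ^ n)" by (simp add: Suc)
  also have "\<dots> = cs c * (f * cs (c ^ n)) * f ^ n" by (simp only: mult.assoc)
  also have "\<dots> = cs c * cs (c ^ n) * (f * f ^ n)" by (simp only: cs_comm[of "c^n" f, symmetric] mult.assoc)
  finally show ?case by (simp add: cs_mult)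
qed

definition invertible_bop :: "'a::complex_normed_vector bop \<Rightarrow> bool" where
  "invertible_bop x \<longleftrightarrow> (\<exists>y. x * y = 1 \<and> y * x = 1)"

lemma neumann:
  fixes x :: "'a::complex_banach bop"
  assumes "norm (1 - x) < 1"
  shows "invertible_bop x"
proof -
  define z where "z = 1 - x"
  have sz: "summable (\<lambda>n. z ^ n)"
    by (rule summable_comparison_test[OF _ summable_geometric[of "norm z"]])
       (use assms norm_power_le in \<open>auto simp: z_def\<close>)
  define y where "y = (\<Sum>n. z ^ n)"
  have y1: "y = 1 + (\<Sum>n. z ^ Suc n)"
    using suminf_split_head[OF sz] by (simp add: y_def)
  have zy: "z * y = (\<Sum>n. z ^ Suc n)"
    unfolding y_def using suminf_mult[OF sz, of z] by simp
  have yz: "y * z = (\<Sum>n. z ^ Suc n)"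
    unfolding y_def using suminf_mult2[OF sz, of z] by (simp add: power_Suc2[symmetric])
  have x: "x = 1 - z" by (simp add: z_def)
  have "x * y = 1" unfolding x using y1 zy by (simp add: left_diff_distrib)
  moreover have "y * x = 1" unfolding x using y1 yz by (simp add: right_diff_distrib)
  ultimately show ?thesis unfolding invertible_bop_def by blast
qed


locale pair =
  fixes T S :: "'a::complex_banach bop"
  assumes TS: "T * S = S * T"
begin

definition Acom :: "'a bop set" where
  "Acom = {B. \<forall>C. C * T = T * C \<longrightarrow> C * S = S * C \<longrightarrow> B * C = C * B}"

lemma AcomI: "(\<And>C. C * T = T * C \<Longrightarrow> C * S = S * C \<Longrightarrow> B * C = C * B) \<Longrightarrow> B \<in> Acom"
  unfolding Acom_def by blast
lemma AcomD: "B \<in> Acom \<Longrightarrow> C * T = T * C \<Longrightarrow> C * S = S * C \<Longrightarrow> B * C = C * B"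
  unfolding Acom_def by blast

lemma Acom_T: "T \<in> Acom" by (rule AcomI) simp
lemma Acom_S: "S \<in> Acom" by (rule AcomI) simp
lemma Acom_add: "a \<in> Acom \<Longrightarrow> b \<in> Acom \<Longrightarrow> a + b \<in> Acom"
  by (rule AcomI) (simp add: distrib_left distrib_right AcomD)
lemma Acom_diff: "a \<in> Acom \<Longrightarrow> b \<in> Acom \<Longrightarrow> a - b \<in> Acom"
  by (rule AcomI) (simp add: left_diff_distrib right_diff_distrib AcomD)
lemma Acom_mult: "a \<in> Acom \<Longrightarrow> b \<in> Acom \<Longrightarrow> a * b \<in> Acom"
proof (rule AcomI)
  fix C assume a: "a \<in> Acom" and b: "b \<in> Acom" and c: "C * T = T * C" "C * S = S * C"
  have "a * b * C = a * (C * b)" using AcomD[OF b c] by (simp add: mult.assoc)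
  also have "\<dots> = C * (a * b)" using AcomD[OF a c] by (simp add: mult.assoc[symmetric])
  finally show "a * b * C = C * (a * b)" .
qed
lemma Acom_cs: "cs c \<in> Acom" by (rule AcomI) (rule cs_comm)
lemma Acom_one: "1 \<in> Acom" by (rule AcomI) simp
lemma Acom_zero: "0 \<in> Acom" by (rule AcomI) simp
lemma Acom_power: "a \<in> Acom \<Longrightarrow> a ^ n \<in> Acom"
  by (induct n) (auto intro: Acom_mult Acom_one)
lemma Acom_sum: "(\<And>i. i \<in> I \<Longrightarrow> f i \<in> Acom) \<Longrightarrow> (\<Sum>i\<in>I. f i) \<in> Acom"
  by (induct I rule: infinite_finite_induct) (auto intro: Acom_add Acom_zero)
lemma Acom_commT: "b \<in> Acom \<Longrightarrow> b * T = T * b" by (rule AcomD) (auto simp: TS)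
lemma Acom_commS: "b \<in> Acom \<Longrightarrow> b * S = S * b" by (rule AcomD) (auto simp: TS)
lemma Acom_comm: "a \<in> Acom \<Longrightarrow> b \<in> Acom \<Longrightarrow> a * b = b * a"
  by (rule AcomD) (auto simp: Acom_commT Acom_commS)
lemma Acom_inv: "b \<in> Acom \<Longrightarrow> b * y = 1 \<Longrightarrow> y * b = 1 \<Longrightarrow> y \<in> Acom"
proof (rule AcomI)
  fix C assume b: "b \<in> Acom" and by1: "b * y = 1" and yb: "y * b = 1" and c: "C * T = T * C" "C * S = S * C"
  have bc: "b * C = C * b" by (rule AcomD[OF b c])
  have "y * C = y * C * (b * y)" by (simp add: by1)
  also have "\<dots> = y * (b * C) * y" by (simp add: bc mult.assoc)
  also have "\<dots> = (y * b) * C * y" by (simp add: mult.assoc)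
  finally show "y * C = C * y" by (simp add: yb)
qed

definition ideal :: "'a bop set \<Rightarrow> bool" where
  "ideal I \<longleftrightarrow> I \<subseteq> Acom \<and> 0 \<in> I \<and> (\<forall>a\<in>I. \<forall>b\<in>I. a + b \<in> I) \<and> (\<forall>a\<in>I. \<forall>b\<in>Acom. b * a \<in> I)"

definition maxideal :: "'a bop set \<Rightarrow> bool" where
  "maxideal M \<longleftrightarrow> ideal M \<and> 1 \<notin> M \<and> (\<forall>J. ideal J \<longrightarrow> 1 \<notin> J \<longrightarrow> M \<subseteq> J \<longrightarrow> J = M)"

lemma exists_maxideal:
  assumes "ideal I" "1 \<notin> I"
  shows "\<exists>M. maxideal M \<and> I \<subseteq> M"
proof -
  define F where "F = {J. ideal J \<and> 1 \<notin> J \<and> I \<subseteq> J}"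
  have "F \<noteq> {}" using assms unfolding F_def by blast
  moreover have "\<Union>C \<in> F" if "C \<noteq> {}" "subset.chain F C" for C
  proof -
    have CF: "C \<subseteq> F" and ch: "\<And>X Y. X \<in> C \<Longrightarrow> Y \<in> C \<Longrightarrow> X \<subseteq> Y \<or> Y \<subseteq> X"
      using that(2) unfolding subset.chain_def by blast+
    have "ideal (\<Union>C)"
      unfolding ideal_def
    proof (intro conjI ballI)
      show "\<Union>C \<subseteq> Acom" using CF unfolding F_def ideal_def by blast
      show "0 \<in> \<Union>C" using CF \<open>C \<noteq> {}\<close> unfolding F_def ideal_def by blast
      fix a b assume a: "a \<in> \<Union>C"
      { assume b: "b \<in> \<Union>C"
        from a b obtain X Y where X: "X \<in> C" "a \<in> X" and Y: "Y \<in> C" "b \<in> Y" by blast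
        from ch[OF X(1) Y(1)] have "\<exists>Z\<in>C. a \<in> Z \<and> b \<in> Z" using X Y by blast
        then obtain Z where "Z \<in> C" "a \<in> Z" "b \<in> Z" by blast
        then show "a + b \<in> \<Union>C" using CF unfolding F_def ideal_def by blast }
      { assume b: "b \<in> Acom"
        from a obtain X where X: "X \<in> C" "a \<in> X" by blast
        then show "b * a \<in> \<Union>C" using CF b unfolding F_def ideal_def by blast }
    qed
    moreover have "1 \<notin> \<Union>C" using CF unfolding F_def by blast
    moreover have "I \<subseteq> \<Union>C" using CF \<open>C \<noteq> {}\<close> unfolding F_def by blast
    ultimately show ?thesis unfolding F_def by blast
  qed
  ultimately obtain M where M: "M \<in> F" "\<forall>X\<in>F. M \<subseteq> X \<longrightarrow> X = M"
    using subset_Zorn_nonempty[of F] by blast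
  have "maxideal M" unfolding maxideal_def
  proof (intro conjI allI impI)
    show "ideal M" "1 \<notin> M" using M(1) unfolding F_def by blast+
    fix J assume "ideal J" "1 \<notin> J" "M \<subseteq> J"
    then have "J \<in> F" using M(1) unfolding F_def by blast
    then show "J = M" using M(2) \<open>M \<subseteq> J\<close> by blast
  qed
  then show ?thesis using M(1) unfolding F_def by blast
qed

lemma principal_ideal:
  assumes x: "x \<in> Acom" and ni: "\<not> (\<exists>y\<in>Acom. x * y = 1)"
  shows "ideal {x * a | a. a \<in> Acom}" "1 \<notin> {x * a | a. a \<in> Acom}" "x \<in> {x * a | a. a \<in> Acom}"
proof -
  show "ideal {x * a | a. a \<in> Acom}"
    unfolding ideal_def
  proof (intro conjI ballI)
    show "{x * a | a. a \<in> Acom} \<subseteq> Acom" using x by (auto intro: Acom_mult)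
    show "0 \<in> {x * a | a. a \<in> Acom}" using Acom_zero by force
    fix u v assume u: "u \<in> {x * a | a. a \<in> Acom}"
    { assume v: "v \<in> {x * a | a. a \<in> Acom}"
      from u v obtain a b where "u = x * a" "v = x * b" "a \<in> Acom" "b \<in> Acom" by blast
      then show "u + v \<in> {x * a | a. a \<in> Acom}"
        by (auto simp: distrib_left intro!: exI[of _ "a + b"] Acom_add) }
    { assume v: "v \<in> Acom"
      from u obtain a where a: "u = x * a" "a \<in> Acom" by blast
      have "v * u = x * (v * a)" using a v x Acom_comm[of v x] by (simp add: mult.assoc[symmetric])
      then show "v * u \<in> {x * a | a. a \<in> Acom}" using a v by (blast intro: Acom_mult) }
  qed
  show "1 \<notin> {x * a | a. a \<in> Acom}"
  proof
    assume "1 \<in> {x * a | a. a \<in> Acom}"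
    then obtain a where "1 = x * a" "a \<in> Acom" by blast
    then show False using ni by auto
  qed
  show "x \<in> {x * a | a. a \<in> Acom}" using Acom_one by force
qed

end


locale maxid = pair +
  fixes M :: "'a bop set"
  assumes maxM: "maxideal M"
begin

lemma M_ideal: "ideal M" using maxM unfolding maxideal_def by blast
lemma one_notin: "1 \<notin> M" using maxM unfolding maxideal_def by blast
lemma M_sub: "a \<in> M \<Longrightarrow> a \<in> Acom" using M_ideal unfolding ideal_def by blast
lemma M_zero: "0 \<in> M" using M_ideal unfolding ideal_def by blast
lemma M_add: "a \<in> M \<Longrightarrow> b \<in> M \<Longrightarrow> a + b \<in> M" using M_ideal unfolding ideal_def by blast
lemma M_lmult: "a \<in> M \<Longrightarrow> b \<in> Acom \<Longrightarrow> b * a \<in> M" using M_ideal unfolding ideal_def by blast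
lemma M_rmult: "a \<in> M \<Longrightarrow> b \<in> Acom \<Longrightarrow> a * b \<in> M"
proof -
  assume a: "a \<in> M" and b: "b \<in> Acom"
  have "a * b = b * a" using Acom_comm[OF M_sub[OF a] b] .
  then show ?thesis using M_lmult[OF a b] by simp
qed
lemma M_cs: "a \<in> M \<Longrightarrow> cs c * a \<in> M" using M_lmult Acom_cs by blast
lemma M_uminus: "a \<in> M \<Longrightarrow> - a \<in> M"
  using M_cs[of a "-1"] by (simp add: cs_uminus)
lemma M_diff: "a \<in> M \<Longrightarrow> b \<in> M \<Longrightarrow> a - b \<in> M"
  using M_add[OF _ M_uminus, of a b] by (simp only: diff_conv_add_uminus)
lemma M_sum: "(\<And>i. i \<in> I \<Longrightarrow> f i \<in> M) \<Longrightarrow> (\<Sum>i\<in>I. f i) \<in> M"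
  by (induct I rule: infinite_finite_induct) (auto intro: M_add M_zero)

lemma invmod:
  assumes x: "x \<in> Acom" and xM: "x \<notin> M"
  shows "\<exists>y\<in>Acom. x * y - 1 \<in> M"
proof -
  define J where "J = {m + x * a | m a. m \<in> M \<and> a \<in> Acom}"
  have "ideal J"
    unfolding ideal_def
  proof (intro conjI ballI)
    show "J \<subseteq> Acom" unfolding J_def using x by (blast intro: Acom_add Acom_mult M_sub)
    show "0 \<in> J" unfolding J_def using M_zero Acom_zero by force
    fix u v assume u: "u \<in> J"
    { assume v: "v \<in> J"
      from u v obtain m a n b where "u = m + x * a" "v = n + x * b" "m \<in> M" "a \<in> Acom" "n \<in> M" "b \<in> Acom"
        unfolding J_def by blast
      then have "u + v = (m + n) + x * (a + b)" by (simp add: distrib_left add_ac)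
      then show "u + v \<in> J" unfolding J_def using \<open>m \<in> M\<close> \<open>n \<in> M\<close> \<open>a \<in> Acom\<close> \<open>b \<in> Acom\<close>
        by (blast intro: Acom_add M_add) }
    { assume v: "v \<in> Acom"
      from u obtain m a where ma: "u = m + x * a" "m \<in> M" "a \<in> Acom" unfolding J_def by blast
      have "v * u = v * m + x * (v * a)"
        using ma v x Acom_comm[of v x] by (simp add: distrib_left mult.assoc[symmetric])
      then show "v * u \<in> J" unfolding J_def using ma v by (blast intro: Acom_mult M_lmult) }
  qed
  moreover have "M \<subseteq> J"
  proof
    fix m assume "m \<in> M"
    then show "m \<in> J" unfolding J_def using Acom_zero by force
  qed
  moreover have "x \<in> J" unfolding J_def using M_zero Acom_one by force
  ultimately have "1 \<in> J" using maxM xM unfolding maxideal_def by blast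
  then obtain m a where "1 = m + x * a" "m \<in> M" "a \<in> Acom" unfolding J_def by blast
  then have "x * a - 1 = x * a - (m + x * a)" by simp
  then have "x * a - 1 = - m" by simp
  moreover have "- m \<in> M" using \<open>m \<in> M\<close> by (rule M_uminus)
  ultimately show ?thesis using \<open>a \<in> Acom\<close> by (intro bexI[of _ a]) simp_all
qed

definition q :: "'a bop \<Rightarrow> real" where
  "q x = Inf ((\<lambda>a. norm (x - a)) ` M)"

lemma q_le: "a \<in> M \<Longrightarrow> q x \<le> norm (x - a)"
  unfolding q_def by (rule cInf_lower) (auto intro: bdd_belowI[of _ 0])
lemma q_ge: "(\<And>a. a \<in> M \<Longrightarrow> c \<le> norm (x - a)) \<Longrightarrow> c \<le> q x"
  unfolding q_def using M_zero by (intro cInf_greatest) auto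
lemma q_nonneg: "0 \<le> q x" by (rule q_ge) simp
lemma q_less: "q x < r \<Longrightarrow> \<exists>a\<in>M. norm (x - a) < r"
  unfolding q_def using M_zero by (subst (asm) cInf_less_iff) (auto intro: bdd_belowI[of _ 0])
lemma q_norm: "q x \<le> norm x" using q_le[OF M_zero] by simp
lemma q_cong: assumes "x - y \<in> M" shows "q x = q y"
proof -
  have "q x \<le> q y" if "x - y \<in> M" for x y
  proof (rule q_ge)
    fix a assume "a \<in> M"
    then have "a + (x - y) \<in> M" using that M_add by blast
    then have "q x \<le> norm (x - (a + (x - y)))" by (rule q_le)
    then show "q x \<le> norm (y - a)" by (simp add: algebra_simps)
  qed
  moreover have "y - x \<in> M" using M_uminus[OF assms] by simp
  ultimately show ?thesis using assms by (simp add: antisym)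
qed
lemma q_M: "m \<in> M \<Longrightarrow> q m = 0"
  using q_le[of m m] q_nonneg[of m] by simp
lemma q_add: "q (x + y) \<le> q x + q y"
proof (rule field_le_epsilon)
  fix e :: real assume e: "0 < e"
  obtain a where a: "a \<in> M" "norm (x - a) < q x + e/2" using q_less[of x "q x + e/2"] e by auto
  obtain b where b: "b \<in> M" "norm (y - b) < q y + e/2" using q_less[of y "q y + e/2"] e by auto
  have "q (x + y) \<le> norm ((x + y) - (a + b))" using M_add[OF a(1) b(1)] by (rule q_le)
  also have "\<dots> \<le> norm (x - a) + norm (y - b)"
    by (metis add_diff_add norm_triangle_ineq)
  finally show "q (x + y) \<le> q x + q y + e" using a b by simp
qed
lemma q_diff: "q (x - y) \<le> q x + q y"
proof -
  have "q (x - y) \<le> q x + q (- y)" using q_add[of x "-y"] by simp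
  moreover have "q (- y) = q y"
  proof (rule antisym)
    show "q (- y) \<le> q y"
    proof (rule q_ge)
      fix a assume "a \<in> M"
      then have "q (- y) \<le> norm (- y - (- a))" using M_uminus q_le by blast
      also have "- y - (- a) = - (y - a)" by simp
      then have "norm (- y - (- a)) = norm (y - a)" by (simp only: norm_minus_cancel)
      finally show "q (- y) \<le> norm (y - a)" .
    qed
    show "q y \<le> q (- y)"
    proof (rule q_ge)
      fix a assume "a \<in> M"
      then have "q y \<le> norm (y - (- a))" using M_uminus q_le by blast
      also have "y - (- a) = - (- y - a)" by simp
      then have "norm (y - (- a)) = norm (- y - a)" by (simp only: norm_minus_cancel)
      finally show "q y \<le> norm (- y - a)" .
    qed
  qed
  ultimately show ?thesis by simp
qed
lemma q_abs_diff: "\<bar>q x - q y\<bar> \<le> q (x - y)"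
proof -
  have "q x \<le> q (x - y) + q y" using q_add[of "x - y" y] by simp
  moreover have "q y \<le> q (x - y) + q x" using q_diff[of x "x - y"] by simp
  ultimately show ?thesis by linarith
qed
lemma q_mult:
  assumes x: "x \<in> Acom" and y: "y \<in> Acom"
  shows "q (x * y) \<le> q x * q y"
proof (rule field_le_epsilon)
  fix d :: real assume d: "0 < d"
  define e where "e = min 1 (d / (q x + q y + 1))"
  have K: "0 < q x + q y + 1" using q_nonneg[of x] q_nonneg[of y] by linarith
  have e1: "0 < e" using d K by (simp add: e_def)
  have e2: "e \<le> 1" by (simp add: e_def)
  have "e \<le> d / (q x + q y + 1)" by (simp add: e_def)
  then have e3: "e * (q x + q y + 1) \<le> d" using K by (simp add: le_divide_eq)
  note e = e1 e2 e3
  obtain a where a: "a \<in> M" "norm (x - a) < q x + e" using q_less[of x "q x + e"] e by auto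
  obtain b where b: "b \<in> M" "norm (y - b) < q y + e" using q_less[of y "q y + e"] e by auto
  have m: "x * b + a * y - a * b \<in> M"
    by (rule M_diff[OF M_add[OF M_lmult[OF b(1) x] M_rmult[OF a(1) y]] M_rmult[OF a(1) M_sub[OF b(1)]]])
  have eq: "x * y - (x * b + a * y - a * b) = (x - a) * (y - b)" by (simp add: algebra_simps)
  have "q (x * y) \<le> norm (x * y - (x * b + a * y - a * b))" by (rule q_le[OF m])
  also have "\<dots> = norm ((x - a) * (y - b))" by (simp only: eq)
  also have "\<dots> \<le> norm (x - a) * norm (y - b)" by (rule norm_mult_ineq)
  also have "\<dots> \<le> (q x + e) * (q y + e)"
    using a b q_nonneg[of x] e by (intro mult_mono) auto
  also have "\<dots> = q x * q y + e * (q x + q y + e)" by (simp add: algebra_simps)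
  also have "\<dots> \<le> q x * q y + e * (q x + q y + 1)"
    using e q_nonneg[of x] q_nonneg[of y] by (intro add_left_mono mult_left_mono) auto
  finally show "q (x * y) \<le> q x * q y + d" using e by linarith
qed
lemma q_cs:
  assumes x: "x \<in> Acom"
  shows "q (cs c * x) \<le> cmod c * q x"
proof (rule field_le_epsilon)
  fix d :: real assume d: "0 < d"
  define e where "e = d / (cmod c + 1)"
  have "0 < cmod c + 1" using norm_ge_zero[of c] by linarith
  then have e1: "0 < e" using d by (simp add: e_def divide_pos_pos)
  have "cmod c * e = d * (cmod c / (cmod c + 1))" by (simp add: e_def)
  also have "\<dots> \<le> d * 1" using d \<open>0 < cmod c + 1\<close> by (intro mult_left_mono) (simp_all add: divide_le_eq)
  finally have e2: "cmod c * e \<le> d" by simp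
  note e = e1 e2
  obtain a where a: "a \<in> M" "norm (x - a) < q x + e" using q_less[of x "q x + e"] e by auto
  have "q (cs c * x) \<le> norm (cs c * x - cs c * a)" using M_cs[OF a(1)] by (rule q_le)
  also have "\<dots> = norm (cs c * (x - a))" by (simp add: right_diff_distrib)
  also have "\<dots> \<le> cmod c * norm (x - a)" by (rule norm_cs_mult)
  also have "\<dots> \<le> cmod c * (q x + e)" using a by (intro mult_left_mono) auto
  finally show "q (cs c * x) \<le> cmod c * q x + d" using e by (simp add: algebra_simps)
qed
lemma q_sum: "q (\<Sum>i\<in>I. g i) \<le> (\<Sum>i\<in>I. q (g i))"
proof (induct I rule: infinite_finite_induct)
  case (infinite A) then show ?case using q_M[OF M_zero] by simp
next
  case empty then show ?case using q_M[OF M_zero] by simp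
next
  case (insert x F)
  have "q (\<Sum>i\<in>insert x F. g i) = q (g x + (\<Sum>i\<in>F. g i))" using insert by simp
  also have "\<dots> \<le> q (g x) + q (\<Sum>i\<in>F. g i)" by (rule q_add)
  also have "\<dots> \<le> q (g x) + (\<Sum>i\<in>F. q (g i))" using insert by simp
  finally show ?case using insert by simp
qed
lemma q_one_le: "q 1 \<le> 1" using q_norm[of 1] norm_one_le by (rule order_trans)
lemma q_one: "1 \<le> q 1"
proof (rule ccontr)
  assume "\<not> 1 \<le> q 1"
  then obtain a where a: "a \<in> M" "norm (1 - a) < 1" using q_less[of 1 1] by auto
  then obtain y where y: "a * y = 1" "y * a = 1" using neumann unfolding invertible_bop_def by blast
  have "y \<in> Acom" using Acom_inv[OF M_sub[OF a(1)] y] .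
  then have "y * a \<in> M" using M_lmult a(1) by blast
  then show False using y one_notin by simp
qed

end


lemma root_pow_n:
  assumes "0 < n"
  shows "(cis (2 * pi / real n) ^ j) ^ n = 1"
proof -
  have "cis (2 * pi / real n) ^ n = cis (real n * (2 * pi / real n))" by (rule Complex.DeMoivre)
  also have "\<dots> = 1" using assms by simp
  finally have w: "cis (2 * pi / real n) ^ n = 1" .
  have "(cis (2 * pi / real n) ^ j) ^ n = cis (2 * pi / real n) ^ (j * n)" by (simp only: power_mult)
  also have "\<dots> = (cis (2 * pi / real n) ^ n) ^ j" by (simp only: mult.commute[of j n] power_mult)
  finally show ?thesis using w by simp
qed

lemma root_norm: "cmod (cis a ^ j) = 1"
  by (simp add: norm_power)

lemma root_sum:
  assumes "0 < m" "m < n"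
  shows "(\<Sum>j<n. (cis (2 * pi / real n) ^ m) ^ j) = 0"
proof -
  define z where "z = cis (2 * pi / real n) ^ m"
  have z: "z = cis (real m * (2 * pi / real n))" unfolding z_def by (rule Complex.DeMoivre)
  have zn: "z ^ n = 1" unfolding z_def using root_pow_n[of n m] assms by simp
  have "z \<noteq> 1"
  proof
    assume "z = 1"
    then have "cos (real m * (2 * pi / real n)) = 1" by (simp add: z complex_eq_iff)
    then obtain k :: int where k: "real m * (2 * pi / real n) = k * 2 * pi"
      by (auto simp: cos_one_2pi_int)
    have "real n > 0" using assms by simp
    with k have "real m = real n * k" by (simp add: field_simps)
    then have "real_of_int (int m) = real_of_int (int n * k)" by simp
    then have "int m = int n * k" by (simp only: of_int_eq_iff)
    show False
    proof (cases "k \<le> 0")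
      case True
      then have "int n * k \<le> 0" by (simp add: mult_nonneg_nonpos)
      then show False using \<open>int m = int n * k\<close> assms by linarith
    next
      case False
      then have "int n * 1 \<le> int n * k" by (intro mult_left_mono) auto
      then show False using \<open>int m = int n * k\<close> assms by linarith
    qed
  qed
  then show ?thesis using zn by (simp add: sum_gp_strict z_def[symmetric])
qed


lemma geom_bop: "(\<Sum>m<n. y ^ m) * (1 - y) = 1 - (y::'a::complex_normed_vector bop) ^ n"
proof (induct n)
  case 0 then show ?case by simp
next
  case (Suc n)
  have a: "(\<Sum>m<n. y ^ m) * (1 - y) = 1 - y ^ n" by (rule Suc)
  have b: "y ^ n * (1 - y) = y ^ n - y ^ n * y" by (simp add: right_diff_distrib)
  have "(\<Sum>m<Suc n. y ^ m) * (1 - y) = (\<Sum>m<n. y ^ m) * (1 - y) + y ^ n * (1 - y)"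
    by (simp add: distrib_right)
  also have "\<dots> = 1 - y ^ n + (y ^ n - y ^ n * y)" by (simp only: a b)
  also have "\<dots> = 1 - y ^ n * y" by simp
  also have "y ^ n * y = y ^ Suc n" by (simp only: power_Suc2)
  finally show ?case .
qed

locale gm = maxid +
  fixes B :: "'a bop"
  assumes B_A: "B \<in> Acom"
    and noc: "\<And>c. B - cs c \<notin> M"
begin

lemma P_A: "1 - cs l * B \<in> Acom"
  by (intro Acom_diff Acom_one Acom_mult Acom_cs B_A)

lemma nm: "1 - cs l * B \<notin> M"
proof
  assume in_M: "1 - cs l * B \<in> M"
  show False
  proof (cases "l = 0")
    case True
    then show False using in_M one_notin by simp
  next
    case False
    have 1: "cs (-1/l) * (1 - cs l * B) \<in> M" using in_M by (rule M_cs)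
    have "-1/l * l = -1" using False by simp
    then have 2: "cs (-1/l) * (1 - cs l * B) = cs (-1/l) - cs (-1) * B"
      by (simp add: right_diff_distrib mult.assoc[symmetric] cs_mult)
    have a: "cs (-1/l) = - cs (1/l)" using cs_uminus[of "1/l"] by simp
    have b: "cs (-1) = (-1 :: 'a bop)" using cs_uminus[of 1] by simp
    have 3: "cs (-1/l) - cs (-1) * B = B - cs (1/l)"
      by (simp only: a b) simp
    from 1 have "B - cs (1/l) \<in> M" unfolding 2 3 .
    then show False using noc by blast
  qed
qed

definition R :: "complex \<Rightarrow> 'a bop" where
  "R l = (SOME y. y \<in> Acom \<and> (1 - cs l * B) * y - 1 \<in> M)"

lemma R: "R l \<in> Acom" "(1 - cs l * B) * R l - 1 \<in> M"
proof -
  have "\<exists>y. y \<in> Acom \<and> (1 - cs l * B) * y - 1 \<in> M" using invmod[OF P_A nm] by blast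
  then have "R l \<in> Acom \<and> (1 - cs l * B) * R l - 1 \<in> M" unfolding R_def by (rule someI_ex)
  then show "R l \<in> Acom" "(1 - cs l * B) * R l - 1 \<in> M" by blast+
qed

lemma resolvent: "R a - R b - cs (a - b) * (B * R a * R b) \<in> M"
proof -
  define Pa where "Pa = 1 - cs a * B"
  define Pb where "Pb = 1 - cs b * B"
  define ma where "ma = Pa * R a - 1"
  define mb where "mb = Pb * R b - 1"
  have ma: "ma \<in> M" unfolding ma_def Pa_def by (rule R)
  have mb: "mb \<in> M" unfolding mb_def Pb_def by (rule R)
  have d: "cs (a - b) * B = Pb - Pa" unfolding Pa_def Pb_def by (simp add: cs_diff left_diff_distrib)
  have comm: "R a * R b = R b * R a" by (rule Acom_comm[OF R(1) R(1)])
  have "cs (a - b) * (B * R a * R b) = (Pb - Pa) * R a * R b" by (simp add: d[symmetric] mult.assoc)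
  also have "\<dots> = Pb * (R a * R b) - Pa * R a * R b" by (simp add: left_diff_distrib mult.assoc)
  also have "Pb * (R a * R b) = (Pb * R b) * R a" by (simp add: comm mult.assoc)
  also have "Pb * R b = mb + 1" by (simp add: mb_def)
  also have "Pa * R a = ma + 1" by (simp add: ma_def)
  finally have eq: "cs (a - b) * (B * R a * R b) = (mb + 1) * R a - (ma + 1) * R b" .
  have "R a - R b - cs (a - b) * (B * R a * R b) = ma * R b - mb * R a"
    unfolding eq by (simp add: algebra_simps)
  also have "\<dots> \<in> M" using ma mb R(1) by (intro M_diff M_rmult)
  finally show ?thesis .
qed

lemma q_R_diff: "q (R a - R b) \<le> cmod (a - b) * norm B * q (R a) * q (R b)"
proof -
  have "q (R a - R b) = q (cs (a - b) * (B * R a * R b))" by (rule q_cong[OF resolvent])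
  also have "\<dots> \<le> cmod (a - b) * q (B * R a * R b)"
    by (rule q_cs) (intro Acom_mult B_A R(1))
  also have "q (B * R a * R b) \<le> q (B * R a) * q (R b)"
    by (rule q_mult) (intro Acom_mult B_A R(1))+
  also have "q (B * R a) \<le> q B * q (R a)" by (rule q_mult[OF B_A R(1)])
  also have "q B \<le> norm B" by (rule q_norm)
  finally show ?thesis
    using q_nonneg[of "R a"] q_nonneg[of "R b"] q_nonneg[of "B * R a"] q_nonneg[of "B"]
    by (simp add: mult_right_mono mult_left_mono mult.assoc)
qed

definition f :: "complex \<Rightarrow> real" where "f l = q (R l)"

lemma f_nonneg: "0 \<le> f l" unfolding f_def by (rule q_nonneg)

lemma f_step: "f a \<le> f b + cmod (a - b) * norm B * f a * f b"
proof -
  have "q (R a) = q ((R a - R b) + R b)" by simp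
  also have "\<dots> \<le> q (R a - R b) + q (R b)" by (rule q_add)
  finally show ?thesis using q_R_diff[of a b] unfolding f_def by linarith
qed


lemma f_cont: "isCont f b"
  unfolding isCont_def
proof (rule LIM_I)
  fix e :: real assume e: "0 < e"
  define N where "N = norm B"
  define v where "v = f b"
  have N0: "0 \<le> N" unfolding N_def by simp
  have v0: "0 \<le> v" unfolding v_def by (rule f_nonneg)
  define C where "C = N * (v + 1) + 1"
  have C: "1 \<le> C" "N * v \<le> C" using N0 v0 by (auto simp: C_def algebra_simps)
  define d where "d = min (1 / (2 * C)) (e / (2 * C * (v + 1)))"
  have d0: "0 < d" using C e v0 by (auto simp: d_def)
  show "\<exists>s>0. \<forall>x. x \<noteq> b \<and> norm (x - b) < s \<longrightarrow> norm (f x - f b) < e"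
  proof (intro exI[of _ d] conjI allI impI)
    show "0 < d" by (rule d0)
    fix a assume "a \<noteq> b \<and> norm (a - b) < d"
    then have t: "cmod (a - b) < d" by simp
    define t where "t = cmod (a - b)"
    have t0: "0 \<le> t" unfolding t_def by simp
    have t1: "t \<le> 1 / (2 * C)" using t unfolding t_def d_def by simp
    have t2: "t < e / (2 * C * (v + 1))" using t unfolding t_def d_def by simp
    define u where "u = f a"
    have u0: "0 \<le> u" unfolding u_def by (rule f_nonneg)
    have s1: "u \<le> v + t * N * u * v" using f_step[of a b] unfolding u_def v_def t_def N_def .
    have s2: "v \<le> u + t * N * u * v" using f_step[of b a] unfolding u_def v_def t_def N_def
      by (simp add: norm_minus_commute mult_ac)
    have "t * (N * v) \<le> (1 / (2 * C)) * C" using t1 t0 C N0 v0 by (intro mult_mono) auto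
    then have tNv: "t * N * v \<le> 1/2" using C by (simp add: mult.assoc)
    have "t * N * u * v = (t * N * v) * u" by (simp add: mult_ac)
    also have "\<dots> \<le> (1/2) * u" using tNv u0 by (rule mult_right_mono)
    finally have "u \<le> v + u / 2" using s1 by simp
    then have u2: "u \<le> 2 * v" by simp
    have "t * N * u * v \<le> t * N * (2 * v) * v"
      using u2 t0 N0 v0 by (intro mult_right_mono mult_left_mono) (auto intro: mult_nonneg_nonneg)
    also have "\<dots> = 2 * t * ((N * v) * v)" by (simp add: mult_ac)
    also have "(N * v) * v \<le> C * (v + 1)" using C(2) v0 by (intro mult_mono) (auto intro: order_trans[OF _ C(1)])
    then have "2 * t * ((N * v) * v) \<le> 2 * t * (C * (v + 1))" using t0 by (intro mult_left_mono) auto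
    also have "\<dots> < 2 * (e / (2 * C * (v + 1))) * (C * (v + 1))"
    proof (rule mult_strict_right_mono)
      show "2 * t < 2 * (e / (2 * C * (v + 1)))" using t2 by linarith
      show "0 < C * (v + 1)" using C v0 by (intro mult_pos_pos) auto
    qed
    also have "\<dots> = e"
    proof -
      have "v + 1 \<noteq> 0" "C \<noteq> 0" using C v0 by auto
      then show ?thesis by (simp add: mult.assoc)
    qed
    finally have "t * N * u * v < e" .
    then show "norm (f a - f b) < e" using s1 s2 unfolding u_def[symmetric] v_def[symmetric] by simp
  qed
qed

lemma f_bound: "\<exists>K\<ge>0. \<forall>l. cmod l \<le> \<rho> \<longrightarrow> f l \<le> K"
proof -
  have "continuous_on (cball 0 \<rho>) f"
    by (intro continuous_at_imp_continuous_on ballI f_cont)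
  then have "compact (f ` cball 0 \<rho>)" by (rule compact_continuous_image[OF _ compact_cball])
  then have "bounded (f ` cball 0 \<rho>)" by (rule compact_imp_bounded)
  then obtain K where K: "\<And>x. x \<in> f ` cball 0 \<rho> \<Longrightarrow> norm x \<le> K" unfolding bounded_iff by blast
  have "\<forall>l. cmod l \<le> \<rho> \<longrightarrow> f l \<le> max K 0"
  proof (intro allI impI)
    fix l :: complex assume "cmod l \<le> \<rho>"
    then have "norm (f l) \<le> K" by (intro K) auto
    then show "f l \<le> max K 0" by simp
  qed
  then show ?thesis by (intro exI[of _ "max K 0"]) simp
qed


definition w :: "nat \<Rightarrow> complex" where "w n = cis (2 * pi / real n)"

definition H :: "nat \<Rightarrow> complex \<Rightarrow> 'a bop" where
  "H n l = cs (1 / of_nat n) * (\<Sum>j<n. R (w n ^ j * l))"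

lemma H_A: "H n l \<in> Acom"
  unfolding H_def by (intro Acom_mult Acom_cs Acom_sum R(1))

lemma sumG:
  assumes n: "0 < n"
  shows "(\<Sum>j<n. \<Sum>m<n. (cs (w n ^ j * l) * B) ^ m) = cs (of_nat n)"
proof -
  have "(\<Sum>j<n. \<Sum>m<n. (cs (w n ^ j * l) * B) ^ m) = (\<Sum>j<n. \<Sum>m<n. cs ((w n ^ j * l) ^ m) * B ^ m)"
    by (simp add: cs_mult_power)
  also have "\<dots> = (\<Sum>m<n. \<Sum>j<n. cs ((w n ^ j * l) ^ m) * B ^ m)" by (rule sum.swap)
  also have "\<dots> = (\<Sum>m<n. cs (\<Sum>j<n. (w n ^ j * l) ^ m) * B ^ m)"
    by (simp add: cs_sum sum_distrib_right)
  also have "\<dots> = (\<Sum>m<n. cs (l ^ m * (\<Sum>j<n. (w n ^ m) ^ j)) * B ^ m)"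
  proof (rule sum.cong[OF refl])
    fix m assume "m \<in> {..<n}"
    have "(\<Sum>j<n. (w n ^ j * l) ^ m) = (\<Sum>j<n. l ^ m * (w n ^ m) ^ j)"
    proof (rule sum.cong[OF refl])
      fix j
      have "(w n ^ j) ^ m = (w n ^ m) ^ j"
        by (simp only: power_mult[symmetric] mult.commute)
      then show "(w n ^ j * l) ^ m = l ^ m * (w n ^ m) ^ j" by (simp add: power_mult_distrib mult.commute)
    qed
    then show "cs (\<Sum>j<n. (w n ^ j * l) ^ m) * B ^ m = cs (l ^ m * (\<Sum>j<n. (w n ^ m) ^ j)) * B ^ m"
      by (simp add: sum_distrib_left)
  qed
  also have "\<dots> = cs (of_nat n)"
  proof -
    obtain k where k: "n = Suc k" using n by (cases n) auto
    have z: "(\<Sum>j<n. (w n ^ Suc i) ^ j) = 0" if "i < k" for i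
      unfolding w_def by (rule root_sum) (use that k in auto)
    have "(\<Sum>m<Suc k. cs (l ^ m * (\<Sum>j<n. (w n ^ m) ^ j)) * B ^ m)
       = cs (l ^ 0 * (\<Sum>j<n. (w n ^ 0) ^ j)) * B ^ 0 + (\<Sum>i<k. cs (l ^ Suc i * (\<Sum>j<n. (w n ^ Suc i) ^ j)) * B ^ Suc i)"
      by (rule sum.lessThan_Suc_shift)
    also have "(\<Sum>i<k. cs (l ^ Suc i * (\<Sum>j<n. (w n ^ Suc i) ^ j)) * B ^ Suc i) = 0"
    proof (rule sum.neutral, rule ballI)
      fix i assume "i \<in> {..<k}"
      then have zi: "(\<Sum>j<n. (w n ^ Suc i) ^ j) = 0" by (intro z) auto
      show "cs (l ^ Suc i * (\<Sum>j<n. (w n ^ Suc i) ^ j)) * B ^ Suc i = 0" by (simp only: zi) simp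
    qed
    finally show ?thesis using k by simp
  qed
  finally show ?thesis .
qed

lemma avg:
  assumes n: "0 < n"
  shows "(1 - cs (l ^ n) * B ^ n) * H n l - 1 \<in> M"
proof -
  define W where "W = cs (l ^ n) * B ^ n"
  define SR where "SR = (\<Sum>j<n. R (w n ^ j * l))"
  define G where "G j = (\<Sum>m<n. (cs (w n ^ j * l) * B) ^ m)" for j
  have each: "(1 - W) * R (w n ^ j * l) - G j \<in> M" for j
  proof -
    define y where "y = cs (w n ^ j * l) * B"
    have yn: "y ^ n = W"
    proof -
      have "y ^ n = cs ((w n ^ j * l) ^ n) * B ^ n" unfolding y_def by (rule cs_mult_power)
      also have "(w n ^ j * l) ^ n = (w n ^ j) ^ n * l ^ n" by (rule power_mult_distrib)
      also have "(w n ^ j) ^ n = 1" unfolding w_def using n by (rule root_pow_n)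
      finally show ?thesis by (simp add: W_def)
    qed
    have GA: "G j \<in> Acom" unfolding G_def by (intro Acom_sum Acom_power Acom_mult Acom_cs B_A)
    have "(1 - W) * R (w n ^ j * l) = G j * (1 - y) * R (w n ^ j * l)"
      unfolding G_def y_def[symmetric] geom_bop yn ..
    also have "\<dots> = G j * ((1 - y) * R (w n ^ j * l) - 1) + G j"
      by (simp add: mult.assoc right_diff_distrib left_diff_distrib)
    finally have "(1 - W) * R (w n ^ j * l) - G j = G j * ((1 - y) * R (w n ^ j * l) - 1)" by simp
    also have "\<dots> \<in> M" unfolding y_def by (rule M_lmult[OF R(2) GA])
    finally show ?thesis .
  qed
  have "(1 - W) * SR - cs (of_nat n) = (1 - W) * SR - (\<Sum>j<n. G j)"
    using sumG[OF n, of l] by (simp add: G_def)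
  also have "\<dots> = (\<Sum>j<n. (1 - W) * R (w n ^ j * l) - G j)"
    by (simp add: SR_def sum_distrib_left sum_subtractf)
  also have "\<dots> \<in> M" by (rule M_sum) (rule each)
  finally have key: "(1 - W) * SR - cs (of_nat n) \<in> M" .
  have "cs (1 / of_nat n) * ((1 - W) * SR - cs (of_nat n))
      = cs (1 / of_nat n) * (1 - W) * SR - cs (1 / of_nat n) * cs (of_nat n)"
    by (simp only: right_diff_distrib[of "cs (1 / of_nat n)" "(1 - W) * SR"] mult.assoc)
  also have "cs (1 / of_nat n) * (1 - W) = (1 - W) * cs (1 / of_nat n)" by (rule cs_comm)
  also have "cs (1 / of_nat n) * cs (of_nat n) = (1 :: 'a bop)" using n by (simp add: cs_mult)
  finally have "cs (1 / of_nat n) * ((1 - W) * SR - cs (of_nat n)) = (1 - W) * H n l - 1"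
    by (simp add: H_def SR_def mult.assoc)
  then show ?thesis using M_cs[OF key, of "1 / of_nat n"] by (simp add: W_def)
qed


lemma H_diff:
  assumes n: "0 < n" and K: "\<forall>l. cmod l \<le> \<rho> \<longrightarrow> f l \<le> K"
    and a: "cmod a \<le> \<rho>" and b: "cmod b \<le> \<rho>"
  shows "q (H n a - H n b) \<le> norm B * K\<^sup>2 * cmod (a - b)"
proof -
  have K0: "0 \<le> K" using K a f_nonneg[of a] by (meson order_trans)
  have each: "q (R (w n ^ j * a) - R (w n ^ j * b)) \<le> norm B * K\<^sup>2 * cmod (a - b)" for j
  proof -
    have nw: "cmod (w n ^ j) = 1" unfolding w_def by (rule root_norm)
    have fa: "f (w n ^ j * a) \<le> K" using K a nw by (simp add: norm_mult)
    have fb: "f (w n ^ j * b) \<le> K" using K b nw by (simp add: norm_mult)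
    have d: "cmod (w n ^ j * a - w n ^ j * b) = cmod (a - b)"
      using nw by (simp add: right_diff_distrib[symmetric] norm_mult)
    have "q (R (w n ^ j * a) - R (w n ^ j * b)) \<le> cmod (a - b) * norm B * f (w n ^ j * a) * f (w n ^ j * b)"
      using q_R_diff[of "w n ^ j * a" "w n ^ j * b"] d unfolding f_def by simp
    also have "\<dots> \<le> cmod (a - b) * norm B * K * K"
      using fa fb f_nonneg K0 by (intro mult_mono mult_nonneg_nonneg) auto
    finally show ?thesis by (simp add: power2_eq_square mult_ac)
  qed
  have "H n a - H n b = cs (1 / of_nat n) * (\<Sum>j<n. R (w n ^ j * a) - R (w n ^ j * b))"
    by (simp add: H_def right_diff_distrib sum_subtractf)
  then have "q (H n a - H n b) \<le> cmod (1 / of_nat n) * q (\<Sum>j<n. R (w n ^ j * a) - R (w n ^ j * b))"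
    by (simp only:) (intro q_cs Acom_sum Acom_diff R(1))
  also have "\<dots> \<le> cmod (1 / of_nat n) * (\<Sum>j<n. q (R (w n ^ j * a) - R (w n ^ j * b)))"
    by (intro mult_left_mono q_sum) simp
  also have "\<dots> \<le> cmod (1 / of_nat n) * (\<Sum>j<n. norm B * K\<^sup>2 * cmod (a - b))"
    by (intro mult_left_mono sum_mono each) simp
  also have "\<dots> = norm B * K\<^sup>2 * cmod (a - b)" using n by (simp add: norm_divide)
  finally show ?thesis .
qed


lemma claim:
  assumes n: "0 < n" and s0: "0 \<le> s" and h0: "0 < h" and sh: "s + h \<le> \<rho>"
    and K: "\<forall>l. cmod l \<le> \<rho> \<longrightarrow> f l \<le> K" and hL: "norm B * K\<^sup>2 * h \<le> 1/8"
    and small: "s ^ n * q (B ^ n) \<le> 1/16"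
  shows "(s + h) ^ n * q (B ^ n) \<le> 1/3"
proof -
  define r where "r = s + h"
  have r0: "0 < r" using s0 h0 by (simp add: r_def)
  define l0 where "l0 = complex_of_real s"
  define l1 where "l1 = complex_of_real r"
  define W0 where "W0 = cs (l0 ^ n) * B ^ n"
  define W1 where "W1 = cs (l1 ^ n) * B ^ n"
  define H0 where "H0 = H n l0"
  define H1 where "H1 = H n l1"
  have BnA: "B ^ n \<in> Acom" by (intro Acom_power B_A)
  have W0A: "W0 \<in> Acom" "W1 \<in> Acom" unfolding W0_def W1_def by (intro Acom_mult Acom_cs BnA)+
  have HA: "H0 \<in> Acom" "H1 \<in> Acom" unfolding H0_def H1_def by (rule H_A)+
  have cl0: "cmod (l0 ^ n) = s ^ n" using s0 by (simp add: l0_def norm_power)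
  have cl1: "cmod (l1 ^ n) = r ^ n" using r0 by (simp add: l1_def norm_power)
  have qW0: "q W0 \<le> 1/16"
  proof -
    have "q W0 \<le> cmod (l0 ^ n) * q (B ^ n)" unfolding W0_def by (rule q_cs[OF BnA])
    then show ?thesis using cl0 small by simp
  qed
  have "(1 - W0) * H0 - 1 \<in> M" unfolding W0_def H0_def by (rule avg[OF n])
  moreover have "(1 - W0) * H0 - 1 = (H0 - 1) - W0 * H0" by (simp add: left_diff_distrib)
  ultimately have "q (H0 - 1) = q (W0 * H0)" by (intro q_cong) simp
  also have "\<dots> \<le> q W0 * q H0" by (rule q_mult[OF W0A(1) HA(1)])
  also have "q H0 \<le> q (H0 - 1) + 1"
  proof -
    have "q H0 = q ((H0 - 1) + 1)" by simp
    also have "\<dots> \<le> q (H0 - 1) + q 1" by (rule q_add)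
    finally show ?thesis using q_one_le by linarith
  qed
  then have "q W0 * q H0 \<le> q W0 * (q (H0 - 1) + 1)" using q_nonneg by (intro mult_left_mono) auto
  also have "\<dots> \<le> 1/16 * (q (H0 - 1) + 1)" using qW0 q_nonneg[of "H0 - 1"] by (intro mult_right_mono) auto
  finally have x: "q (H0 - 1) \<le> 1/16 * (q (H0 - 1) + 1)" .
  moreover have "1/16 * (q (H0 - 1) + 1) = q (H0 - 1) / 16 + 1/16" by simp
  ultimately have qH0: "q (H0 - 1) \<le> 1/15" by linarith
  have "q (H1 - H0) \<le> norm B * K\<^sup>2 * cmod (l1 - l0)"
    unfolding H0_def H1_def
  proof (rule H_diff[OF n K])
    have "cmod l1 = r" using r0 by (simp add: l1_def)
    then show "cmod l1 \<le> \<rho>" using sh by (simp add: r_def)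
    show "cmod l0 \<le> \<rho>" using s0 h0 sh by (simp add: l0_def)
  qed
  also have "cmod (l1 - l0) = h" using h0 by (simp add: l0_def l1_def r_def)
  finally have qd: "q (H1 - H0) \<le> 1/8" using hL by simp
  have "q (H1 - 1) = q ((H1 - H0) + (H0 - 1))" by simp
  also have "\<dots> \<le> q (H1 - H0) + q (H0 - 1)" by (rule q_add)
  finally have qH1: "q (H1 - 1) \<le> 1/4" using qd qH0 by linarith
  have "(1 - W1) * H1 - 1 \<in> M" unfolding W1_def H1_def by (rule avg[OF n])
  moreover have "(1 - W1) * H1 - 1 = (1 - W1) * (H1 - 1) - W1" by (simp add: right_diff_distrib)
  ultimately have "q W1 = q ((1 - W1) * (H1 - 1))" by (intro q_cong[symmetric]) simp
  also have "\<dots> \<le> q (1 - W1) * q (H1 - 1)" by (intro q_mult Acom_diff Acom_one W0A HA)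
  also have "q (1 - W1) \<le> 1 + q W1" using q_diff[of 1 W1] q_one_le by linarith
  then have "q (1 - W1) * q (H1 - 1) \<le> (1 + q W1) * (1/4)"
    using qH1 q_nonneg by (intro mult_mono) auto
  finally have "q W1 \<le> (1 + q W1) * (1/4)" .
  moreover have "(1 + q W1) * (1/4) = q W1 / 4 + 1/4" by simp
  ultimately have qW1: "q W1 \<le> 1/3" by linarith
  have l1n: "l1 \<noteq> 0" using r0 by (simp add: l1_def)
  have "B ^ n = cs (1 / l1 ^ n) * W1"
    unfolding W1_def using l1n by (simp add: mult.assoc[symmetric] cs_mult)
  then have "q (B ^ n) \<le> cmod (1 / l1 ^ n) * q W1" by (simp only:) (rule q_cs[OF W0A(2)])
  also have "cmod (1 / l1 ^ n) = 1 / r ^ n" using cl1 by (simp add: norm_divide)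
  finally have "q (B ^ n) \<le> q W1 / r ^ n" by simp
  then have "r ^ n * q (B ^ n) \<le> q W1" using r0 by (simp add: field_simps)
  then show ?thesis using qW1 by (simp add: r_def)
qed

lemma step:
  assumes s0: "0 \<le> s" and h0: "0 < h" and sh: "s + h \<le> \<rho>"
    and K: "\<forall>l. cmod l \<le> \<rho> \<longrightarrow> f l \<le> K" and hL: "norm B * K\<^sup>2 * h \<le> 1/8"
    and Ps: "(\<lambda>n. s ^ n * q (B ^ n)) \<longlonglongrightarrow> 0"
  shows "(\<lambda>n. (s + h/2) ^ n * q (B ^ n)) \<longlonglongrightarrow> 0"
proof -
  define r where "r = s + h"
  define s' where "s' = s + h/2"
  have r0: "0 < r" using s0 h0 by (simp add: r_def)
  have ev: "eventually (\<lambda>n. 0 < n \<and> s ^ n * q (B ^ n) < 1/16) sequentially"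
  proof (rule eventually_conj)
    show "eventually (\<lambda>n. 0 < n) sequentially" by (rule eventually_gt_at_top)
    show "eventually (\<lambda>n. s ^ n * q (B ^ n) < 1/16) sequentially"
      using order_tendstoD(2)[OF Ps, of "1/16"] by simp
  qed
  have ev2: "eventually (\<lambda>n. s' ^ n * q (B ^ n) \<le> (s' / r) ^ n) sequentially"
    using ev
  proof (rule eventually_mono)
    fix n assume "0 < n \<and> s ^ n * q (B ^ n) < 1/16"
    then have "r ^ n * q (B ^ n) \<le> 1/3"
      unfolding r_def by (intro claim[OF _ s0 h0 sh K hL]) auto
    then have "r ^ n * q (B ^ n) \<le> 1" by simp
    then have "(s' / r) ^ n * (r ^ n * q (B ^ n)) \<le> (s' / r) ^ n * 1"
      using s0 h0 r0 by (intro mult_left_mono) (auto simp: s'_def)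
    moreover have "(s' / r) ^ n * (r ^ n * q (B ^ n)) = s' ^ n * q (B ^ n)"
      using r0 by (simp add: power_divide)
    ultimately show "s' ^ n * q (B ^ n) \<le> (s' / r) ^ n" by simp
  qed
  have ev1: "eventually (\<lambda>n. 0 \<le> s' ^ n * q (B ^ n)) sequentially"
    using s0 h0 q_nonneg by (auto simp: s'_def)
  have "(\<lambda>n. (s' / r) ^ n) \<longlonglongrightarrow> 0"
    using s0 h0 r0 by (intro LIMSEQ_power_zero) (auto simp: s'_def r_def)
  then have "(\<lambda>n. s' ^ n * q (B ^ n)) \<longlonglongrightarrow> 0"
    by (rule tendsto_sandwich[OF ev1 ev2 tendsto_const])
  then show ?thesis by (simp add: s'_def)
qed


lemma gm_False: False
proof -
  have "B \<notin> M" using noc[of 0] by simp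
  then obtain B' where B': "B' \<in> Acom" "B * B' - 1 \<in> M" using invmod[OF B_A] by blast
  have powinv: "B ^ n * B' ^ n - 1 \<in> M" for n
  proof (induct n)
    case 0 then show ?case using M_zero by simp
  next
    case (Suc n)
    define X where "X = B ^ n * B' ^ n"
    have XA: "X \<in> Acom" unfolding X_def by (intro Acom_mult Acom_power B_A B'(1))
    have "B ^ Suc n * B' ^ Suc n = B * (X * B')"
      by (simp only: power_Suc[of B] power_Suc2[of B'] X_def mult.assoc)
    also have "X * B' = B' * X" by (rule Acom_comm[OF XA B'(1)])
    finally have "B ^ Suc n * B' ^ Suc n - 1 = (B * B' - 1) * X + (X - 1)"
      by (simp add: mult.assoc left_diff_distrib)
    also have "\<dots> \<in> M" using Suc unfolding X_def[symmetric] by (intro M_add M_rmult[OF B'(2) XA])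
    finally show ?case .
  qed
  define Q where "Q = q B'"
  have Q0: "0 \<le> Q" unfolding Q_def by (rule q_nonneg)
  have qpow: "q (B' ^ n) \<le> Q ^ n" for n
  proof (induct n)
    case 0 then show ?case using q_one_le by simp
  next
    case (Suc n)
    have "q (B' ^ Suc n) = q (B' * B' ^ n)" by simp
    also have "\<dots> \<le> q B' * q (B' ^ n)" by (intro q_mult Acom_power B'(1))
    also have "\<dots> \<le> Q * Q ^ n" unfolding Q_def using Suc q_nonneg by (intro mult_left_mono) (auto simp: Q_def)
    finally show ?case by simp
  qed
  define \<rho> where "\<rho> = Q + 2"
  obtain K where K0: "0 \<le> K" and K: "\<forall>l. cmod l \<le> \<rho> \<longrightarrow> f l \<le> K" using f_bound by blast
  define L where "L = norm B * K\<^sup>2"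
  have L0: "0 \<le> L" unfolding L_def by simp
  define h where "h = min 1 (1 / (8 * (L + 1)))"
  have h0: "0 < h" using L0 by (simp add: h_def)
  have h1: "h \<le> 1" by (simp add: h_def)
  have hL: "norm B * K\<^sup>2 * h \<le> 1/8"
  proof -
    have "L * h \<le> (L + 1) * h" using h0 by (intro mult_right_mono) auto
    also have "\<dots> \<le> (L + 1) * (1 / (8 * (L + 1)))" using L0 by (intro mult_left_mono) (auto simp: h_def)
    also have "\<dots> = 1/8" using L0 by simp
    finally show ?thesis by (simp add: L_def)
  qed
  have iter: "real k * (h/2) + h \<le> \<rho> \<Longrightarrow> (\<lambda>n. (real k * (h/2)) ^ n * q (B ^ n)) \<longlonglongrightarrow> 0" for k
  proof (induct k)
    case 0
    have "eventually (\<lambda>n. (real 0 * (h/2)) ^ n * q (B ^ n) = 0) sequentially"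
      using eventually_gt_at_top[of 0] by (rule eventually_mono) simp
    then show ?case by (rule tendsto_eventually)
  next
    case (Suc k)
    have "real k * (h/2) \<le> real (Suc k) * (h/2)" using h0 by (intro mult_right_mono) auto
    then have le: "real k * (h/2) + h \<le> \<rho>" using Suc.prems by linarith
    have lim: "(\<lambda>n. (real k * (h/2) + h/2) ^ n * q (B ^ n)) \<longlonglongrightarrow> 0"
      using step[OF _ h0 le K hL Suc.hyps[OF le]] h0 by simp
    have eq: "real k * (h/2) + h/2 = real (Suc k) * (h/2)" by (simp add: distrib_right)
    show ?case using lim unfolding eq .
  qed
  define k where "k = nat \<lceil>Q / (h/2)\<rceil>"
  define s where "s = real k * (h/2)"
  have "Q / (h/2) \<le> real k" unfolding k_def by (rule real_nat_ceiling_ge)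
  then have sQ: "Q \<le> s" using h0 by (simp add: s_def field_simps)
  have x0: "0 \<le> Q / (h/2)" using Q0 h0 by simp
  then have "real k = of_int \<lceil>Q / (h/2)\<rceil>" unfolding k_def by simp
  then have "real k < Q / (h/2) + 1" using ceiling_correct[of "Q / (h/2)"] by linarith
  then have "s < (Q / (h/2) + 1) * (h/2)" unfolding s_def using h0 by (intro mult_strict_right_mono) auto
  also have "\<dots> = Q + h/2" using h0 by (simp add: field_simps)
  finally have "s + h \<le> \<rho>" using h1 by (simp add: \<rho>_def)
  then have Ps: "(\<lambda>n. s ^ n * q (B ^ n)) \<longlonglongrightarrow> 0" unfolding s_def by (rule iter)
  then obtain n where n: "s ^ n * q (B ^ n) < 1"
    using order_tendstoD(2)[OF Ps, of 1] by (auto dest: eventually_happens)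
  have "1 \<le> q 1" by (rule q_one)
  also have "q 1 = q (B ^ n * B' ^ n)" using powinv[of n] by (intro q_cong[symmetric]) simp
  also have "\<dots> \<le> q (B ^ n) * q (B' ^ n)" by (intro q_mult Acom_power B_A B'(1))
  also have "\<dots> \<le> q (B ^ n) * Q ^ n" using qpow q_nonneg by (intro mult_left_mono) auto
  also have "\<dots> \<le> q (B ^ n) * s ^ n" using sQ Q0 q_nonneg by (intro mult_left_mono power_mono) auto
  finally show False using n by (simp add: mult.commute)
qed

end


context maxid
begin

lemma value_exists:
  assumes X: "X \<in> Acom"
  shows "\<exists>c. X - cs c \<in> M"
proof (rule ccontr)
  assume "\<not> (\<exists>c. X - cs c \<in> M)"
  then have nc: "\<And>c. X - cs c \<notin> M" by blast
  interpret g: gm T S M X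
    by (intro gm.intro maxid_axioms gm_axioms.intro X nc)
  show False by (rule g.gm_False)
qed

lemma notinv_M:
  assumes "Z \<in> M"
  shows "\<not> invertible_bop Z"
proof
  assume "invertible_bop Z"
  then obtain y where y: "Z * y = 1" "y * Z = 1" unfolding invertible_bop_def by blast
  have "y \<in> Acom" using Acom_inv[OF M_sub[OF assms] y] .
  then have "y * Z \<in> M" using M_lmult[OF assms] by blast
  then show False using y one_notin by simp
qed

end

context maxid
begin
lemma cs_in_M: "cs c \<in> M \<Longrightarrow> c = 0"
proof (rule ccontr)
  assume "cs c \<in> M" "c \<noteq> 0"
  then have "cs (1/c) * cs c \<in> M" by (intro M_cs)
  then show False using \<open>c \<noteq> 0\<close> one_notin by (simp add: cs_mult)
qed
lemma same_value: "X - cs a \<in> M \<Longrightarrow> X - cs b \<in> M \<Longrightarrow> a = b"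
proof -
  assume "X - cs a \<in> M" "X - cs b \<in> M"
  then have "(X - cs b) - (X - cs a) \<in> M" by (rule M_diff[rotated])
  then have "cs (a - b) \<in> M" by (simp add: cs_diff)
  then have "a - b = 0" by (rule cs_in_M)
  then show "a = b" by simp
qed
end

context pair
begin

lemma in_maxideal:
  assumes X: "X \<in> Acom" and ni: "\<not> invertible_bop X"
  shows "\<exists>M. maxideal M \<and> X \<in> M"
proof -
  have ni': "\<not> (\<exists>y\<in>Acom. X * y = 1)"
  proof
    assume "\<exists>y\<in>Acom. X * y = 1"
    then obtain y where "y \<in> Acom" "X * y = 1" by blast
    moreover then have "y * X = 1" using Acom_comm[OF X] by simp
    ultimately show False using ni unfolding invertible_bop_def by blast
  qed
  obtain M where "maxideal M" "{X * a | a. a \<in> Acom} \<subseteq> M"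
    using exists_maxideal[OF principal_ideal(1,2)[OF X ni']] by blast
  then show ?thesis using principal_ideal(3)[OF X ni'] by blast
qed

definition spec :: "'a bop \<Rightarrow> complex set" where
  "spec X = {l. \<not> invertible_bop (X - cs l)}"

lemma joint:
  assumes "maxideal M"
  shows "\<exists>a b. T - cs a \<in> M \<and> S - cs b \<in> M \<and> a \<in> spec T \<and> b \<in> spec S \<and>
           a + \<i> * b \<in> spec (T + cs \<i> * S)"
proof -
  interpret m: maxid T S M using assms by (intro maxid.intro pair_axioms maxid_axioms.intro)
  obtain a where a: "T - cs a \<in> M" using m.value_exists[OF Acom_T] by blast
  obtain b where b: "S - cs b \<in> M" using m.value_exists[OF Acom_S] by blast
  have eq: "(T + cs \<i> * S) - cs (a + \<i> * b) = (T - cs a) + cs \<i> * (S - cs b)"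
    by (simp add: cs_add cs_mult[symmetric] right_diff_distrib mult.assoc)
  have "(T - cs a) + cs \<i> * (S - cs b) \<in> M" using a b by (intro m.M_add m.M_cs)
  then have "(T + cs \<i> * S) - cs (a + \<i> * b) \<in> M" by (simp only: eq)
  then show ?thesis using a b m.notinv_M unfolding spec_def by blast
qed

end


lemma spec_bound:
  fixes X :: "'a::complex_banach bop"
  assumes ni: "\<not> invertible_bop (X - cs l)"
  shows "cmod l \<le> norm X"
proof (rule ccontr)
  assume "\<not> cmod l \<le> norm X"
  then have big: "norm X < cmod l" by simp
  then have l0: "l \<noteq> 0" using norm_ge_zero[of X] by auto
  define Y where "Y = 1 - cs (1 / l) * X"
  have "norm (1 - Y) = norm (cs (1 / l) * X)" by (simp add: Y_def)
  also have "\<dots> \<le> cmod (1 / l) * norm X" by (rule norm_cs_mult)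
  also have "\<dots> < cmod (1 / l) * cmod l" using big l0 by (intro mult_strict_left_mono) (auto simp: norm_divide)
  also have "\<dots> = 1" using l0 by (simp add: norm_divide)
  finally obtain z where z: "Y * z = 1" "z * Y = 1" using neumann unfolding invertible_bop_def by blast
  have eq: "X - cs l = cs (- l) * Y"
  proof -
    have "cs (- l) * Y = cs (- l) - cs (- l * (1 / l)) * X"
      by (simp add: Y_def right_diff_distrib mult.assoc[symmetric] cs_mult)
    also have "- l * (1 / l) = -1" using l0 by simp
    finally have e1: "cs (- l) * Y = cs (- l) - cs (-1) * X" .
    have a: "cs (- l) = - cs l" by (rule cs_uminus)
    have b: "cs (-1) = (-1 :: 'a bop)" using cs_uminus[of 1] by simp
    have e2: "cs (- l) - cs (-1) * X = X - cs l" by (simp add: a b)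
    show ?thesis using e1 e2 by simp
  qed
  have c1: "cs (- l) * cs (- 1 / l) = (1 :: 'a bop)" using l0 by (simp add: cs_mult)
  have c2: "cs (- 1 / l) * cs (- l) = (1 :: 'a bop)" using l0 by (simp add: cs_mult)
  have "(X - cs l) * (z * cs (- 1 / l)) = cs (- l) * (Y * z) * cs (- 1 / l)"
    by (simp add: eq mult.assoc)
  also have "\<dots> = 1" using z c1 by simp
  finally have i1: "(X - cs l) * (z * cs (- 1 / l)) = 1" .
  have "(z * cs (- 1 / l)) * (X - cs l) = z * (cs (- 1 / l) * cs (- l)) * Y"
    by (simp add: eq mult.assoc)
  also have "\<dots> = 1" using z c2 by simp
  finally have i2: "(z * cs (- 1 / l)) * (X - cs l) = 1" .
  show False using ni i1 i2 unfolding invertible_bop_def by blast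
qed

lemma app_Bop: "bounded_clinear_op T \<Longrightarrow> app (Bop T) = T"
  by (rule Bop_inverse) simp

lemma op_spectrum_eq:
  fixes T :: "'a::complex_banach \<Rightarrow> 'a"
  assumes T: "bounded_clinear_op T"
  shows "op_spectrum T = {l. \<not> invertible_bop (Bop T - cs l)}"
proof -
  have "(\<exists>U. bounded_clinear_op U \<and> (\<forall>x. U (T x - scaleC l x) = x) \<and> (\<forall>x. T (U x) - scaleC l (U x) = x))
        \<longleftrightarrow> invertible_bop (Bop T - cs l)" for l
  proof
    assume "\<exists>U. bounded_clinear_op U \<and> (\<forall>x. U (T x - scaleC l x) = x) \<and> (\<forall>x. T (U x) - scaleC l (U x) = x)"
    then obtain U where U: "bounded_clinear_op U" "\<And>x. U (T x - scaleC l x) = x" "\<And>x. T (U x) - scaleC l (U x) = x"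
      by blast
    have "Bop U * (Bop T - cs l) = 1" by (rule bop_eqI) (simp add: app_Bop T U)
    moreover have "(Bop T - cs l) * Bop U = 1" by (rule bop_eqI) (simp add: app_Bop T U)
    ultimately show "invertible_bop (Bop T - cs l)" unfolding invertible_bop_def by blast
  next
    assume "invertible_bop (Bop T - cs l)"
    then obtain y where y: "(Bop T - cs l) * y = 1" "y * (Bop T - cs l) = 1" unfolding invertible_bop_def by blast
    have "app y (T x - scaleC l x) = x" for x
      using arg_cong[OF y(2), of "\<lambda>g. app g x"] by (simp add: app_Bop T)
    moreover have "T (app y x) - scaleC l (app y x) = x" for x
      using arg_cong[OF y(1), of "\<lambda>g. app g x"] by (simp add: app_Bop T)
    ultimately show "\<exists>U. bounded_clinear_op U \<and> (\<forall>x. U (T x - scaleC l x) = x) \<and> (\<forall>x. T (U x) - scaleC l (U x) = x)"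
      using app_bclin by blast
  qed
  then show ?thesis unfolding op_spectrum_def by blast
qed


lemma real_cmod_le1:
  assumes "l \<in> \<real>" "b \<in> \<real>"
  shows "cmod l \<le> cmod (l + \<i> * b)"
proof -
  have "Im l = 0" "Im b = 0" using assms by (auto simp: complex_is_Real_iff)
  then have "cmod l = \<bar>Re (l + \<i> * b)\<bar>" by (simp add: cmod_eq_Re)
  also have "\<dots> \<le> cmod (l + \<i> * b)" by (rule abs_Re_le_cmod)
  finally show ?thesis .
qed

lemma real_cmod_le2:
  assumes "l \<in> \<real>" "a \<in> \<real>"
  shows "cmod l \<le> cmod (a + \<i> * l)"
proof -
  have "Im l = 0" "Im a = 0" using assms by (auto simp: complex_is_Real_iff)
  then have "cmod l = \<bar>Im (a + \<i> * l)\<bar>" by (simp add: cmod_eq_Re)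
  also have "\<dots> \<le> cmod (a + \<i> * l)" by (rule abs_Im_le_cmod)
  finally show ?thesis .
qed

theorem lemma2p15:
  fixes T S :: "'a::complex_banach \<Rightarrow> 'a"
  assumes "bounded_clinear_op T" and "bounded_clinear_op S"
    and "T \<circ> S = S \<circ> T"
    and "op_spectrum T \<subseteq> \<real>" and "op_spectrum S \<subseteq> \<real>"
  shows "max (spectral_radius_op T) (spectral_radius_op S)
           \<le> spectral_radius_op (\<lambda>x. T x + scaleC \<i> (S x))"
proof -
  define A where "A = (\<lambda>x. T x + scaleC \<i> (S x))"
  have bA: "bounded_clinear_op A"
    unfolding A_def by (intro bclin_add bclin_comp[OF bclin_scaleC] assms(1,2))
  define Tb where "Tb = Bop T"
  define Sb where "Sb = Bop S"
  have aT: "app Tb = T" unfolding Tb_def by (rule app_Bop[OF assms(1)])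
  have aS: "app Sb = S" unfolding Sb_def by (rule app_Bop[OF assms(2)])
  have TS: "Tb * Sb = Sb * Tb"
  proof (rule bop_eqI)
    fix x
    have "T (S x) = S (T x)" using fun_cong[OF assms(3), of x] by simp
    then show "app (Tb * Sb) x = app (Sb * Tb) x" by (simp add: aT aS)
  qed
  have aA: "app (Bop A) = A" by (rule app_Bop[OF bA])
  have BA: "Bop A = Tb + cs \<i> * Sb"
    by (rule bop_eqI) (simp only: aA, simp add: aT aS A_def)
  interpret p: pair Tb Sb by (rule pair.intro[OF TS])
  define Ab where "Ab = Tb + cs \<i> * Sb"
  have sT: "op_spectrum T = p.spec Tb" unfolding op_spectrum_eq[OF assms(1)] p.spec_def Tb_def ..
  have sS: "op_spectrum S = p.spec Sb" unfolding op_spectrum_eq[OF assms(2)] p.spec_def Sb_def ..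
  have sA: "op_spectrum A = p.spec Ab" unfolding op_spectrum_eq[OF bA] p.spec_def BA Ab_def ..
  have rT: "l \<in> p.spec Tb \<Longrightarrow> l \<in> \<real>" for l using assms(4) sT by blast
  have rS: "l \<in> p.spec Sb \<Longrightarrow> l \<in> \<real>" for l using assms(5) sS by blast
  have AbA: "Ab \<in> p.Acom" unfolding Ab_def by (intro p.Acom_add p.Acom_mult p.Acom_cs p.Acom_T p.Acom_S)
  have k1: "\<exists>\<nu>\<in>p.spec Ab. cmod l \<le> cmod \<nu>" if l: "l \<in> p.spec Tb" for l
  proof -
    have "Tb - cs l \<in> p.Acom" by (intro p.Acom_diff p.Acom_T p.Acom_cs)
    then obtain M where M: "p.maxideal M" "Tb - cs l \<in> M"
      using p.in_maxideal l unfolding p.spec_def by blast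
    interpret m: maxid Tb Sb M by (intro maxid.intro p.pair_axioms maxid_axioms.intro M(1))
    obtain a b where ab: "Tb - cs a \<in> M" "b \<in> p.spec Sb" "a + \<i> * b \<in> p.spec Ab"
      using p.joint[OF M(1)] unfolding Ab_def by blast
    have "a = l" using m.same_value[OF ab(1) M(2)] .
    then show ?thesis using ab real_cmod_le1[OF rT[OF l] rS[OF ab(2)]] by blast
  qed
  have k2: "\<exists>\<nu>\<in>p.spec Ab. cmod l \<le> cmod \<nu>" if l: "l \<in> p.spec Sb" for l
  proof -
    have "Sb - cs l \<in> p.Acom" by (intro p.Acom_diff p.Acom_S p.Acom_cs)
    then obtain M where M: "p.maxideal M" "Sb - cs l \<in> M"
      using p.in_maxideal l unfolding p.spec_def by blast
    interpret m: maxid Tb Sb M by (intro maxid.intro p.pair_axioms maxid_axioms.intro M(1))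
    obtain a b where ab: "Sb - cs b \<in> M" "a \<in> p.spec Tb" "a + \<i> * b \<in> p.spec Ab"
      using p.joint[OF M(1)] unfolding Ab_def by blast
    have "b = l" using m.same_value[OF ab(1) M(2)] .
    then show ?thesis using ab real_cmod_le2[OF rS[OF l] rT[OF ab(2)]] by blast
  qed
  have k3: "p.spec Tb \<noteq> {} \<and> p.spec Sb \<noteq> {}" if \<nu>: "\<nu> \<in> p.spec Ab" for \<nu>
  proof -
    have "Ab - cs \<nu> \<in> p.Acom" by (intro p.Acom_diff AbA p.Acom_cs)
    then obtain M where M: "p.maxideal M" "Ab - cs \<nu> \<in> M"
      using p.in_maxideal \<nu> unfolding p.spec_def by blast
    then show ?thesis using p.joint[OF M(1)] by blast
  qed
  have bdd: "bdd_above (cmod ` p.spec Ab)"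
    by (rule bdd_aboveI[of _ "norm Ab"]) (auto simp: p.spec_def intro: spec_bound)
  show ?thesis
  proof (cases "p.spec Ab = {}")
    case True
    then have "p.spec Tb = {}" "p.spec Sb = {}" using k1 k2 by blast+
    then show ?thesis using True unfolding spectral_radius_op_def sT sS A_def[symmetric] sA by simp
  next
    case False
    then have ne: "p.spec Tb \<noteq> {}" "p.spec Sb \<noteq> {}" using k3 by blast+
    have "Sup (cmod ` p.spec Tb) \<le> Sup (cmod ` p.spec Ab)"
    proof (rule cSup_least)
      show "cmod ` p.spec Tb \<noteq> {}" using ne by simp
      fix x assume "x \<in> cmod ` p.spec Tb"
      then obtain l where "l \<in> p.spec Tb" "x = cmod l" by blast
      then obtain \<nu> where "\<nu> \<in> p.spec Ab" "x \<le> cmod \<nu>" using k1 by blast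
      then show "x \<le> Sup (cmod ` p.spec Ab)" using cSup_upper[OF _ bdd] by force
    qed
    moreover have "Sup (cmod ` p.spec Sb) \<le> Sup (cmod ` p.spec Ab)"
    proof (rule cSup_least)
      show "cmod ` p.spec Sb \<noteq> {}" using ne by simp
      fix x assume "x \<in> cmod ` p.spec Sb"
      then obtain l where "l \<in> p.spec Sb" "x = cmod l" by blast
      then obtain \<nu> where "\<nu> \<in> p.spec Ab" "x \<le> cmod \<nu>" using k2 by blast
      then show "x \<le> Sup (cmod ` p.spec Ab)" using cSup_upper[OF _ bdd] by force
    qed
    ultimately show ?thesis unfolding spectral_radius_op_def sT sS A_def[symmetric] sA by simp
  qed
qed

end
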